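(* Let $D=(E,\mathcal{F})$ be a binary delta-matroid. If every element of $E$ has primal type $u$ in $D$, then $D$ is even, i.e. $|X\Delta Y|$ is even for all $X,Y\in\mathcal{F}$.
   Context: A delta-matroid is a pair $D=(E,\mathcal{F})$ with $E$ finite, $\mathcal{F}$ a nonempty collection of subsets of $E$, such that for all $X,Y\in\mathcal{F}$ and $u\in X\Delta Y$ there is $v\in X\Delta Y$ (possibly $v=u$) with $X\Delta\{u,v\}\in\mathcal{F}$. The twist by $A\subseteq E$ is $D*A=(E,\{A\Delta X:X\in\mathcal{F}\})$. For a symmetric matrix $C$ over $\mathrm{GF}(2)$ indexed by $E$, $D(C)=(E,\{A\subseteq E: C[A]\text{ non-singular}\})$, with $C[A]$ the principal submatrix on $A$ and $C[\emptyset]$ non-singular by convention; a delta-matroid is binary if some twist of it is isomorphic to some $D(C)$. Let $\mathcal{F}_{\min}(D)$ be the set of minimum-cardinality feasible sets. An element $e$ is a ribbon loop if it lies in no member of $\mathcal{F}_{\min}(D)$; a ribbon loop $e$ is orientable if it is not a ribbon loop in $D*e$. An element has primal type $u$ if it is an orientable ribbon loop. *)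

theory Defs
  imports Main "HOL-Library.Z2" "HOL-Combinatorics.Permutations"
begin

definition symd :: "'a set \<Rightarrow> 'a set \<Rightarrow> 'a set" where
  "symd X Y = (X - Y) \<union> (Y - X)"

definition delta_matroid :: "'a set \<Rightarrow> 'a set set \<Rightarrow> bool" where
  "delta_matroid E F \<longleftrightarrow> finite E \<and> F \<noteq> {} \<and> (\<forall>X\<in>F. X \<subseteq> E) \<and>
     (\<forall>X\<in>F. \<forall>Y\<in>F. \<forall>u\<in>symd X Y. \<exists>v\<in>symd X Y. symd X {u, v} \<in> F)"

definition twist :: "'a set set \<Rightarrow> 'a set \<Rightarrow> 'a set set" where
  "twist F A = (\<lambda>X. symd A X) ` F"

definition pdet :: "('a \<Rightarrow> 'a \<Rightarrow> bit) \<Rightarrow> 'a set \<Rightarrow> bit" where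
  "pdet C A = (\<Sum>p | p permutes A. of_int (sign p) * (\<Prod>i\<in>A. C i (p i)))"

text \<open>Feasible sets of D(C), for C symmetric indexed by E (det of empty matrix is 1).\<close>
definition DC :: "'a set \<Rightarrow> ('a \<Rightarrow> 'a \<Rightarrow> bit) \<Rightarrow> 'a set set" where
  "DC E C = {A. A \<subseteq> E \<and> pdet C A \<noteq> 0}"

definition binary_dm :: "'a set \<Rightarrow> 'a set set \<Rightarrow> bool" where
  "binary_dm E F \<longleftrightarrow> (\<exists>A C. A \<subseteq> E \<and> (\<forall>i\<in>E. \<forall>j\<in>E. C i j = C j i) \<and>
       (\<exists>f. bij_betw f E E \<and> (\<lambda>X. f ` X) ` twist F A = DC E C))"

definition F_min :: "'a set set \<Rightarrow> 'a set set" where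
  "F_min F = {X \<in> F. \<forall>Y\<in>F. card X \<le> card Y}"

definition ribbon_loop :: "'a set \<Rightarrow> 'a set set \<Rightarrow> 'a \<Rightarrow> bool" where
  "ribbon_loop E F e \<longleftrightarrow> e \<in> E \<and> (\<forall>X\<in>F_min F. e \<notin> X)"

definition orientable_ribbon_loop :: "'a set \<Rightarrow> 'a set set \<Rightarrow> 'a \<Rightarrow> bool" where
  "orientable_ribbon_loop E F e \<longleftrightarrow> ribbon_loop E F e \<and> \<not> ribbon_loop E (twist F {e}) e"

definition primal_type_u :: "'a set \<Rightarrow> 'a set set \<Rightarrow> 'a \<Rightarrow> bool" where
  "primal_type_u E F e \<longleftrightarrow> orientable_ribbon_loop E F e"

definition even_dm :: "'a set set \<Rightarrow> bool" where
  "even_dm F \<longleftrightarrow> (\<forall>X\<in>F. \<forall>Y\<in>F. even (card (symd X Y)))"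

end

theory Submission
  imports Defs
begin

declare mult_bit_eq_and[simp del] add_bit_eq_xor[simp del]

lemma bit_idem[simp]: "(c::bit) * c = c" by (cases c) simp_all

lemma sum_bit_pairs_zero:
  fixes f :: "'b \<Rightarrow> bit"
  assumes "finite T" "\<forall>x\<in>T. s x \<in> T \<and> s (s x) = x \<and> s x \<noteq> x \<and> f (s x) = f x"
  shows "sum f T = 0"
  using assms
proof (induction T rule: finite_psubset_induct)
  case (psubset T)
  show ?case
  proof (cases "T = {}")
    case True then show ?thesis by simp
  next
    case False
    then obtain x where x: "x \<in> T" by blast
    let ?T' = "T - {x, s x}"
    have sx: "s x \<in> T" "s x \<noteq> x" "f (s x) = f x" "s (s x) = x" using psubset.prems x by auto
    have IH: "sum f ?T' = 0"
    proof (rule psubset.IH)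
      show "?T' \<subset> T" using x by blast
      show "\<forall>z\<in>?T'. s z \<in> ?T' \<and> s (s z) = z \<and> s z \<noteq> z \<and> f (s z) = f z"
      proof
        fix z assume z: "z \<in> ?T'"
        then have zT: "z \<in> T" "z \<noteq> x" "z \<noteq> s x" by auto
        have P: "s z \<in> T" "s (s z) = z" "s z \<noteq> z" "f (s z) = f z" using psubset.prems zT(1) by auto
        have "s z \<noteq> x" using P(2) zT(3) by auto
        moreover have "s z \<noteq> s x" using P(2) sx(4) zT(2) by metis
        ultimately show "s z \<in> ?T' \<and> s (s z) = z \<and> s z \<noteq> z \<and> f (s z) = f z" using P by simp
      qed
    qed
    have "sum f T = f x + sum f (T - {x})" using psubset.hyps x by (simp add: sum.remove)
    also have "sum f (T - {x}) = f (s x) + sum f (T - {x} - {s x})"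
      using psubset.hyps sx by (intro sum.remove) auto
    also have "T - {x} - {s x} = ?T'" by auto
    finally show ?thesis using IH sx by simp
  qed
qed

lemma sum_bit_invol:
  fixes f :: "'b \<Rightarrow> bit"
  assumes "finite S" "\<forall>x\<in>S. s x \<in> S \<and> s (s x) = x \<and> f (s x) = f x"
  shows "sum f S = sum f {x\<in>S. s x = x}"
proof -
  have "sum f S = sum f {x\<in>S. s x = x} + sum f {x\<in>S. s x \<noteq> x}"
    using assms(1) by (subst sum.union_disjoint[symmetric]) (auto intro: sum.cong)
  moreover have "sum f {x\<in>S. s x \<noteq> x} = 0"
  proof (rule sum_bit_pairs_zero)
    show "finite {x \<in> S. s x \<noteq> x}" using assms(1) by simp
    show "\<forall>x\<in>{x \<in> S. s x \<noteq> x}. s x \<in> {x \<in> S. s x \<noteq> x} \<and> s (s x) = x \<and> s x \<noteq> x \<and> f (s x) = f x"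
    proof
      fix x assume x: "x \<in> {x \<in> S. s x \<noteq> x}"
      then have "s x \<in> S" "s (s x) = x" "f (s x) = f x" "s x \<noteq> x" using assms(2) by auto
      then show "s x \<in> {x \<in> S. s x \<noteq> x} \<and> s (s x) = x \<and> s x \<noteq> x \<and> f (s x) = f x" by simp
    qed
  qed
  ultimately show ?thesis by simp
qed

definition invs :: "'a set \<Rightarrow> ('a \<Rightarrow> 'a) set" where
  "invs Z = {p. (\<forall>i. p (p i) = i) \<and> (\<forall>i. i \<notin> Z \<longrightarrow> p i = i)}"

definition wt :: "('a \<Rightarrow> 'a \<Rightarrow> bit) \<Rightarrow> 'a set \<Rightarrow> ('a \<Rightarrow> 'a) \<Rightarrow> bit" where
  "wt C Z p = (\<Prod>i\<in>Z. C i (p i))"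

definition hh :: "('a \<Rightarrow> 'a \<Rightarrow> bit) \<Rightarrow> 'a set \<Rightarrow> bit" where
  "hh C Z = (\<Sum>p\<in>invs Z. wt C Z p)"

lemma invs_permutes: "p \<in> invs Z \<Longrightarrow> p permutes Z"
proof -
  assume p: "p \<in> invs Z"
  have inv: "p (p i) = i" for i using p unfolding invs_def by simp
  have out: "i \<notin> Z \<Longrightarrow> p i = i" for i using p unfolding invs_def by simp
  show ?thesis unfolding permutes_def
  proof (intro conjI allI impI)
    fix y show "\<exists>!x. p x = y"
    proof (rule ex1I[of _ "p y"])
      show "p (p y) = y" by (rule inv)
      fix x assume "p x = y" then show "x = p y" using inv[of x] by simp
    qed
  qed (use out in auto)
qed

lemma invs_eq: "invs Z = {p. p permutes Z \<and> inv p = p}"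
proof (intro set_eqI iffI)
  fix p assume p: "p \<in> invs Z"
  then have "inv p = p" unfolding invs_def by (intro inv_equality) auto
  then show "p \<in> {p. p permutes Z \<and> inv p = p}" using invs_permutes[OF p] by simp
next
  fix p assume "p \<in> {p. p permutes Z \<and> inv p = p}"
  then have "p permutes Z" "inv p = p" by auto
  moreover have "p (p i) = i" for i using permutes_inverses(2)[OF \<open>p permutes Z\<close>, of i] \<open>inv p = p\<close> by simp
  ultimately show "p \<in> invs Z" unfolding invs_def
    by (auto simp: permutes_not_in)
qed

lemma finite_invs: "finite Z \<Longrightarrow> finite (invs Z)"
  by (rule finite_subset[OF _ finite_permutations[of Z]]) (auto simp: invs_eq)

lemma pdet_hh:
  assumes "finite Z" and sym: "\<forall>i\<in>Z. \<forall>j\<in>Z. C i j = C j i"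
  shows "pdet C Z = hh C Z"
proof -
  have s1: "pdet C Z = (\<Sum>p\<in>{p. p permutes Z}. wt C Z p)"
    unfolding pdet_def wt_def by (rule sum.cong) (auto simp: sign_def)
  have w: "wt C Z (inv p) = wt C Z p" if p: "p permutes Z" for p
  proof -
    have "wt C Z p = (\<Prod>j\<in>Z. C (p j) (inv p (p j)))"
      unfolding wt_def using p sym by (intro prod.cong) (auto simp: permutes_inverses permutes_in_image)
    also have "\<dots> = (\<Prod>i\<in>Z. C i (inv p i))"
      using prod.reindex_bij_betw[OF permutes_imp_bij[OF p], of "\<lambda>i. C i (inv p i)"] by simp
    finally show ?thesis unfolding wt_def by simp
  qed
  have "(\<Sum>p\<in>{p. p permutes Z}. wt C Z p) = (\<Sum>p\<in>{p\<in>{p. p permutes Z}. inv p = p}. wt C Z p)"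
    apply (rule sum_bit_invol)
    using assms(1) apply (simp add: finite_permutations)
    using w by (auto simp: permutes_inv inv_inv_eq permutes_bij)
  then show ?thesis using s1 unfolding hh_def invs_eq by simp
qed

lemma invs_memD: "p \<in> invs Z \<Longrightarrow> p (p i) = i" "p \<in> invs Z \<Longrightarrow> i \<notin> Z \<Longrightarrow> p i = i"
  unfolding invs_def by auto

lemma invs_in: "p \<in> invs Z \<Longrightarrow> x \<in> Z \<Longrightarrow> p x \<in> Z"
  by (metis invs_memD)

lemma hh_rec:
  assumes fin: "finite Z" and xZ: "x \<in> Z" and sym: "\<forall>i\<in>Z. \<forall>j\<in>Z. C i j = C j i"
  shows "hh C Z = (\<Sum>y\<in>Z. C x y * hh C (Z - {x, y}))"
proof -
  have "hh C Z = (\<Sum>y\<in>Z. \<Sum>p\<in>{p\<in>invs Z. p x = y}. wt C Z p)"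
    unfolding hh_def
    by (rule sum.group[symmetric]) (use fin finite_invs invs_in xZ in auto)
  also have "\<dots> = (\<Sum>y\<in>Z. C x y * hh C (Z - {x, y}))"
  proof (rule sum.cong[OF refl])
    fix y assume yZ: "y \<in> Z"
    show "(\<Sum>p\<in>{p\<in>invs Z. p x = y}. wt C Z p) = C x y * hh C (Z - {x, y})"
    proof (cases "y = x")
      case True
      have eq: "{p\<in>invs Z. p x = x} = invs (Z - {x})"
        unfolding invs_def by auto
      have "(\<Sum>p\<in>{p\<in>invs Z. p x = y}. wt C Z p) = (\<Sum>p\<in>invs (Z - {x}). C x x * wt C (Z - {x}) p)"
        unfolding True eq
      proof (rule sum.cong[OF refl])
        fix p assume "p \<in> invs (Z - {x})"
        then have "p x = x" by (simp add: invs_memD)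
        then show "wt C Z p = C x x * wt C (Z - {x}) p"
          unfolding wt_def using fin xZ by (simp add: prod.remove)
      qed
      also have "\<dots> = C x y * hh C (Z - {x, y})"
        unfolding hh_def True by (simp add: sum_distrib_left)
      finally show ?thesis .
    next
      case False
      let ?Z = "Z - {x, y}"
      have cxy: "C y x = C x y" using sym xZ yZ by auto
      have "(\<Sum>p\<in>{p\<in>invs Z. p x = y}. wt C Z p) = (\<Sum>q\<in>invs ?Z. C x y * wt C ?Z q)"
      proof (rule sum.reindex_bij_witness[where i = "\<lambda>q. q(x := y, y := x)" and j = "\<lambda>p. p(x := x, y := y)"])
        fix a assume a: "a \<in> {p\<in>invs Z. p x = y}"
        then have ax: "a x = y" and ay: "a y = x" and ainv: "\<And>i. a (a i) = i"
          and aout: "\<And>i. i \<notin> Z \<Longrightarrow> a i = i"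
          using invs_memD[of a Z] by auto
        show "(a(x := x, y := y))(x := y, y := x) = a"
          using ax ay False by (auto simp: fun_eq_iff)
        have ai: "i \<noteq> x \<Longrightarrow> i \<noteq> y \<Longrightarrow> a i \<noteq> x \<and> a i \<noteq> y" for i
          using ainv ax ay by metis
        show "a(x := x, y := y) \<in> invs ?Z"
          unfolding invs_def using ai ainv aout by auto
        have "wt C Z a = C x (a x) * (C y (a y) * wt C ?Z a)"
          unfolding wt_def using fin xZ yZ False
          by (simp add: prod.remove[of Z x] prod.remove[of "Z - {x}" y] Diff_insert2[symmetric])
        also have "wt C ?Z a = wt C ?Z (a(x := x, y := y))"
          unfolding wt_def by (rule prod.cong) auto
        finally show "C x y * wt C ?Z (a(x := x, y := y)) = wt C Z a"
          using ax ay cxy by (simp add: mult.assoc[symmetric])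
      next
        fix b assume b: "b \<in> invs ?Z"
        then have binv: "\<And>i. b (b i) = i" and bout: "\<And>i. i \<notin> ?Z \<Longrightarrow> b i = i"
          using invs_memD[of b ?Z] by auto
        have bx: "b x = x" and by': "b y = y" using bout by auto
        show "(b(x := y, y := x))(x := x, y := y) = b"
          using bx by' by (auto simp: fun_eq_iff)
        have bi: "i \<noteq> x \<Longrightarrow> i \<noteq> y \<Longrightarrow> b i \<noteq> x \<and> b i \<noteq> y" for i
          using binv bx by' by metis
        show "b(x := y, y := x) \<in> {p\<in>invs Z. p x = y}"
          unfolding invs_def using bi binv bout xZ yZ False by auto
      qed
      also have "\<dots> = C x y * hh C ?Z"
        unfolding hh_def by (simp add: sum_distrib_left)
      finally show ?thesis .
    qed
  qed
  finally show ?thesis .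
qed


lemma bit_dbl[simp]: "(c::bit) + c = 0" by simp

definition TT :: "('a set \<Rightarrow> bit) \<Rightarrow> 'a set \<Rightarrow> 'a set \<Rightarrow> bit" where
  "TT h B Y = (\<Sum>s\<in>symd B Y. h (symd B {s}) * h (symd Y {s}))"

lemma ident_step:
  fixes h :: "'a set \<Rightarrow> bit" and C :: "'a \<Rightarrow> 'a \<Rightarrow> bit"
  assumes finE: "finite E"
    and rec: "\<And>Z x. Z \<subseteq> E \<Longrightarrow> x \<in> Z \<Longrightarrow> h Z = (\<Sum>y\<in>Z. C x y * h (Z - {x, y}))"
    and BE: "B \<subseteq> E" and YE: "Y \<subseteq> E" and xB: "x \<in> B" and xY: "x \<notin> Y"
    and IH: "\<And>B' Y'. B' \<subseteq> E \<Longrightarrow> Y' \<subseteq> E \<Longrightarrow> card B' + card Y' < card B + card Y \<Longrightarrow>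
               TT h B' Y' = of_nat (card (symd B' Y')) * h B' * h Y'"
  shows "TT h B Y = of_nat (card (symd B Y)) * h B * h Y"
proof -
  define S where "S = symd B Y"
  define B0 where "B0 = B - {x}"
  define eps :: bit where "eps = of_nat (card S)"
  define hz where "hz Z y = (if y \<in> Z then h (Z - {x, y}) else 0)" for Z y
  have finB: "finite B" and finY: "finite Y" using finE BE YE finite_subset by auto
  have finS: "finite S" unfolding S_def symd_def using finB finY by auto
  have SE: "S \<subseteq> E" unfolding S_def symd_def using BE YE by auto
  have xS: "x \<in> S" unfolding S_def symd_def using xB xY by auto
  have expand: "h Z = (\<Sum>y\<in>E. C x y * hz Z y)" if ZE: "Z \<subseteq> E" and xZ: "x \<in> Z" for Z
  proof -
    have "(\<Sum>y\<in>E. C x y * hz Z y) = (\<Sum>y\<in>Z. C x y * hz Z y)"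
      by (rule sum.mono_neutral_right) (use finE ZE in \<open>auto simp: hz_def\<close>)
    also have "\<dots> = (\<Sum>y\<in>Z. C x y * h (Z - {x, y}))"
      by (rule sum.cong) (auto simp: hz_def)
    finally show ?thesis using rec[OF ZE xZ] by simp
  qed
  have T1: "TT h B Y = h B0 * h (insert x Y) + (\<Sum>s\<in>S - {x}. h (symd B {s}) * h (symd Y {s}))"
  proof -
    have "TT h B Y = h (symd B {x}) * h (symd Y {x}) + (\<Sum>s\<in>S - {x}. h (symd B {s}) * h (symd Y {s}))"
      unfolding TT_def S_def[symmetric] using finS xS by (simp add: sum.remove)
    moreover have "symd B {x} = B0" "symd Y {x} = insert x Y"
      unfolding symd_def B0_def using xB xY by auto
    ultimately show ?thesis by simp
  qed
  have hYx: "h (insert x Y) = (\<Sum>y\<in>E. C x y * hz (insert x Y) y)"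
    using expand[of "insert x Y"] YE xB BE by auto
  have hBs: "h (symd B {s}) = (\<Sum>y\<in>E. C x y * hz (symd B {s}) y)" if "s \<in> S - {x}" for s
    using expand[of "symd B {s}"] that SE BE xB by (auto simp: symd_def)
  have T2: "TT h B Y = (\<Sum>y\<in>E. C x y * (h B0 * hz (insert x Y) y +
              (\<Sum>s\<in>S - {x}. hz (symd B {s}) y * h (symd Y {s}))))"
  proof -
    have a: "h B0 * h (insert x Y) = (\<Sum>y\<in>E. C x y * (h B0 * hz (insert x Y) y))"
      unfolding hYx by (simp add: sum_distrib_left mult.left_commute)
    have "(\<Sum>s\<in>S - {x}. h (symd B {s}) * h (symd Y {s}))
        = (\<Sum>s\<in>S - {x}. \<Sum>y\<in>E. C x y * (hz (symd B {s}) y * h (symd Y {s})))"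
      by (rule sum.cong[OF refl]) (simp add: hBs sum_distrib_right mult.assoc)
    also have "\<dots> = (\<Sum>y\<in>E. \<Sum>s\<in>S - {x}. C x y * (hz (symd B {s}) y * h (symd Y {s})))"
      by (rule sum.swap)
    also have "\<dots> = (\<Sum>y\<in>E. C x y * (\<Sum>s\<in>S - {x}. hz (symd B {s}) y * h (symd Y {s})))"
      by (simp add: sum_distrib_left)
    finally show ?thesis using T1 a by (simp add: sum.distrib[symmetric] distrib_left)
  qed
  have R: "of_nat (card S) * h B * h Y = (\<Sum>y\<in>E. C x y * (eps * hz B y * h Y))"
    unfolding eps_def expand[OF BE xB] by (simp add: sum_distrib_left sum_distrib_right mult.assoc mult.left_commute)
  have per: "h B0 * hz (insert x Y) y + (\<Sum>s\<in>S - {x}. hz (symd B {s}) y * h (symd Y {s}))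
             = eps * hz B y * h Y" if yE: "y \<in> E" for y
  proof -
    have B0E: "B0 \<subseteq> E" using BE unfolding B0_def by auto
    have cB0: "card B0 < card B"
    proof -
      have "card B0 = card B - 1" unfolding B0_def using finB xB by (simp add: card_Diff_singleton)
      moreover have "card B > 0" using finB xB card_gt_0_iff by blast
      ultimately show ?thesis by linarith
    qed
    show ?thesis
    proof (cases "y = x")
      case True
      have symB0: "symd B0 Y = S - {x}" unfolding S_def B0_def symd_def using xY by auto
      have a: "hz (insert x Y) y = h Y" unfolding True hz_def using xY by simp
      have b: "(\<Sum>s\<in>S - {x}. hz (symd B {s}) y * h (symd Y {s})) = TT h B0 Y"
        unfolding TT_def symB0
      proof (rule sum.cong[OF refl])
        fix s assume s: "s \<in> S - {x}"
        have "x \<in> symd B {s}" "symd B {s} - {x, x} = symd B0 {s}"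
          using s xB unfolding B0_def symd_def by auto
        then show "hz (symd B {s}) y * h (symd Y {s}) = h (symd B0 {s}) * h (symd Y {s})"
          unfolding hz_def True by simp
      qed
      have c: "TT h B0 Y = of_nat (card (S - {x})) * h B0 * h Y"
        using IH[OF B0E YE] cB0 symB0 by simp
      have d: "hz B y = h B0" unfolding hz_def True B0_def using xB by simp
      have e: "eps = 1 + of_nat (card (S - {x}))"
      proof -
        have "card S = Suc (card (S - {x}))" by (rule card_Suc_Diff1[symmetric, OF finS xS])
        then show ?thesis unfolding eps_def by simp
      qed
      show ?thesis unfolding a b c d e by (simp add: algebra_simps)
    next
      case yx: False
      show ?thesis
      proof (cases "y \<in> B")
        case yB: True
        define B1 where "B1 = B0 - {y}"
        have B1E: "B1 \<subseteq> E" using B0E unfolding B1_def by auto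
        have cB1: "card B1 + card Y < card B + card Y"
        proof -
          have "card B1 \<le> card B0" unfolding B1_def by (rule card_Diff1_le)
          then show ?thesis using cB0 by linarith
        qed
        have "B - {x, y} = B1" unfolding B1_def B0_def by auto
        then have d: "hz B y = h B1" unfolding hz_def using yB by simp
        show ?thesis
        proof (cases "y \<in> Y")
          case yY: True
          have yS: "y \<notin> S" unfolding S_def symd_def using yB yY by auto
          have symB1: "symd B1 Y = insert y (S - {x})"
            unfolding S_def B1_def B0_def symd_def using xY yY yB yx by auto
          have a: "hz (insert x Y) y = h (Y - {y})" unfolding hz_def using yY xY yx
            by (simp add: insert_Diff_if)
          have b: "(\<Sum>s\<in>S - {x}. hz (symd B {s}) y * h (symd Y {s}))
                 = (\<Sum>s\<in>S - {x}. h (symd B1 {s}) * h (symd Y {s}))"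
          proof (rule sum.cong[OF refl])
            fix s assume s: "s \<in> S - {x}"
            have "y \<in> symd B {s}" "symd B {s} - {x, y} = symd B1 {s}"
              using s xB yB yS unfolding B1_def B0_def symd_def by auto
            then show "hz (symd B {s}) y * h (symd Y {s}) = h (symd B1 {s}) * h (symd Y {s})"
              unfolding hz_def by simp
          qed
          have c: "TT h B1 Y = h B0 * h (Y - {y}) + (\<Sum>s\<in>S - {x}. h (symd B1 {s}) * h (symd Y {s}))"
          proof -
            have "TT h B1 Y = h (symd B1 {y}) * h (symd Y {y}) + (\<Sum>s\<in>S - {x}. h (symd B1 {s}) * h (symd Y {s}))"
              unfolding TT_def symB1 using finS yS by (simp add: sum.insert)
            moreover have "symd B1 {y} = B0" "symd Y {y} = Y - {y}"
              unfolding B1_def B0_def symd_def using yB yY yx by auto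
            ultimately show ?thesis by simp
          qed
          have c2: "TT h B1 Y = eps * h B1 * h Y"
          proof -
            have "card (insert y (S - {x})) = card S"
              using finS xS yS card_Suc_Diff1[OF finS xS] by simp
            then show ?thesis using IH[OF B1E YE cB1] symB1 eps_def by simp
          qed
          show ?thesis unfolding a b d using c c2 by simp
        next
          case yY: False
          have yS: "y \<in> S" unfolding S_def symd_def using yB yY by auto
          have symB1: "symd B1 Y = S - {x, y}"
            unfolding S_def B1_def B0_def symd_def using xY yY yB yx by auto
          have a: "hz (insert x Y) y = 0" unfolding hz_def using yY yx by simp
          have split: "S - {x} = insert y (S - {x, y})" using yS yx by auto
          have b: "(\<Sum>s\<in>S - {x}. hz (symd B {s}) y * h (symd Y {s}))
                 = (\<Sum>s\<in>S - {x, y}. h (symd B1 {s}) * h (symd Y {s}))"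
          proof -
            have "(\<Sum>s\<in>S - {x}. hz (symd B {s}) y * h (symd Y {s}))
                = hz (symd B {y}) y * h (symd Y {y}) + (\<Sum>s\<in>S - {x, y}. hz (symd B {s}) y * h (symd Y {s}))"
              unfolding split using finS by (simp add: sum.insert)
            moreover have "hz (symd B {y}) y = 0" unfolding hz_def symd_def using yB by auto
            moreover have "(\<Sum>s\<in>S - {x, y}. hz (symd B {s}) y * h (symd Y {s}))
                 = (\<Sum>s\<in>S - {x, y}. h (symd B1 {s}) * h (symd Y {s}))"
            proof (rule sum.cong[OF refl])
              fix s assume s: "s \<in> S - {x, y}"
              have "y \<in> symd B {s}" "symd B {s} - {x, y} = symd B1 {s}"
                using s xB yB unfolding B1_def B0_def symd_def by auto
              then show "hz (symd B {s}) y * h (symd Y {s}) = h (symd B1 {s}) * h (symd Y {s})"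
                unfolding hz_def by simp
            qed
            ultimately show ?thesis by simp
          qed
          have c2: "TT h B1 Y = eps * h B1 * h Y"
          proof -
            have c1: "card S = Suc (card (S - {x}))" by (rule card_Suc_Diff1[symmetric, OF finS xS])
            have c2: "card (S - {x}) = Suc (card (S - {x} - {y}))" using finS yS yx by (intro card_Suc_Diff1[symmetric]) auto
            have "S - {x} - {y} = S - {x, y}" by auto
            then have "card S = Suc (Suc (card (S - {x, y})))" using c1 c2 by simp
            then have "eps = of_nat (card (S - {x, y}))" unfolding eps_def by simp
            then show ?thesis using IH[OF B1E YE cB1] symB1 by simp
          qed
          show ?thesis unfolding a b d using c2 by (simp add: TT_def symB1)
        qed
      next
        case yB: False
        have d: "hz B y = 0" unfolding hz_def using yB by simp
        show ?thesis
        proof (cases "y \<in> Y")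
          case yY: True
          have yS: "y \<in> S" unfolding S_def symd_def using yB yY by auto
          have a: "hz (insert x Y) y = h (Y - {y})" unfolding hz_def using yY xY yx
            by (simp add: insert_Diff_if)
          have split: "S - {x} = insert y (S - {x, y})" using yS yx by auto
          have "(\<Sum>s\<in>S - {x}. hz (symd B {s}) y * h (symd Y {s}))
              = hz (symd B {y}) y * h (symd Y {y}) + (\<Sum>s\<in>S - {x, y}. hz (symd B {s}) y * h (symd Y {s}))"
            unfolding split using finS by (simp add: sum.insert)
          moreover have "hz (symd B {y}) y = h B0" unfolding hz_def symd_def B0_def using yB yx
            by (auto intro!: arg_cong[where f = h])
          moreover have "symd Y {y} = Y - {y}" unfolding symd_def using yY by auto
          moreover have "(\<Sum>s\<in>S - {x, y}. hz (symd B {s}) y * h (symd Y {s})) = 0"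
            by (rule sum.neutral) (auto simp: hz_def symd_def yB)
          ultimately show ?thesis unfolding a d by simp
        next
          case yY: False
          have yS: "y \<notin> S" unfolding S_def symd_def using yB yY by auto
          have a: "hz (insert x Y) y = 0" unfolding hz_def using yY yx by simp
          have "(\<Sum>s\<in>S - {x}. hz (symd B {s}) y * h (symd Y {s})) = 0"
            by (rule sum.neutral) (use yS in \<open>auto simp: hz_def symd_def yB\<close>)
          then show ?thesis unfolding a d by simp
        qed
      qed
    qed
  qed
  show ?thesis
    unfolding S_def[symmetric] T2 R by (rule sum.cong[OF refl]) (simp add: per)
qed

lemma TT_sym: "TT h B Y = TT h Y B"
proof -
  have "symd B Y = symd Y B" by (auto simp: symd_def)
  then show ?thesis unfolding TT_def by (simp add: mult.commute)
qed

lemma ident: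
  fixes h :: "'a set \<Rightarrow> bit" and C :: "'a \<Rightarrow> 'a \<Rightarrow> bit"
  assumes finE: "finite E"
    and rec: "\<And>Z x. Z \<subseteq> E \<Longrightarrow> x \<in> Z \<Longrightarrow> h Z = (\<Sum>y\<in>Z. C x y * h (Z - {x, y}))"
  shows "B \<subseteq> E \<Longrightarrow> Y \<subseteq> E \<Longrightarrow> TT h B Y = of_nat (card (symd B Y)) * h B * h Y"
proof (induction "card B + card Y" arbitrary: B Y rule: less_induct)
  case less
  show ?case
  proof (cases "\<exists>x. x \<in> B \<and> x \<notin> Y")
    case True
    then obtain x where "x \<in> B" "x \<notin> Y" by blast
    show ?thesis
    proof (rule ident_step[where C=C and x=x])
      show "finite E" by (rule finE)
      show "\<And>Z x. Z \<subseteq> E \<Longrightarrow> x \<in> Z \<Longrightarrow> h Z = (\<Sum>y\<in>Z. C x y * h (Z - {x, y}))" by (rule rec)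
      show "B \<subseteq> E" "Y \<subseteq> E" by (rule less.prems)+
      show "x \<in> B" "x \<notin> Y" by fact+
      show "\<And>B' Y'. B' \<subseteq> E \<Longrightarrow> Y' \<subseteq> E \<Longrightarrow> card B' + card Y' < card B + card Y \<Longrightarrow>
               TT h B' Y' = of_nat (card (symd B' Y')) * h B' * h Y'" using less.hyps by blast
    qed
  next
    case nB: False
    show ?thesis
    proof (cases "\<exists>x. x \<in> Y \<and> x \<notin> B")
      case True
      then obtain x where "x \<in> Y" "x \<notin> B" by blast
      have "TT h Y B = of_nat (card (symd Y B)) * h Y * h B"
      proof (rule ident_step[where C=C and x=x])
        show "finite E" by (rule finE)
        show "\<And>Z x. Z \<subseteq> E \<Longrightarrow> x \<in> Z \<Longrightarrow> h Z = (\<Sum>y\<in>Z. C x y * h (Z - {x, y}))" by (rule rec)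
        show "Y \<subseteq> E" "B \<subseteq> E" by (rule less.prems)+
        show "x \<in> Y" "x \<notin> B" by fact+
        show "\<And>B' Y'. B' \<subseteq> E \<Longrightarrow> Y' \<subseteq> E \<Longrightarrow> card B' + card Y' < card Y + card B \<Longrightarrow>
                 TT h B' Y' = of_nat (card (symd B' Y')) * h B' * h Y'" using less.hyps by (simp add: add.commute)
      qed
      moreover have "symd Y B = symd B Y" by (auto simp: symd_def)
      ultimately show ?thesis by (simp add: TT_sym mult.commute mult.left_commute)
    next
      case False
      with nB have "symd B Y = {}" by (auto simp: symd_def)
      then show ?thesis unfolding TT_def by simp
    qed
  qed
qed

lemma of_nat_bit: "(of_nat n :: bit) = (if even n then 0 else 1)"
  by (induction n) auto

lemma symd_image:
  assumes "inj_on f E" "U \<subseteq> E" "V \<subseteq> E"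
  shows "f ` (symd U V) = symd (f ` U) (f ` V)"
proof -
  have "f ` (U - V) = f ` U - f ` V"
    by (rule inj_on_image_set_diff[OF assms(1)]) (use assms in auto)
  moreover have "f ` (V - U) = f ` V - f ` U"
    by (rule inj_on_image_set_diff[OF assms(1)]) (use assms in auto)
  ultimately
  show ?thesis unfolding symd_def by (simp add: image_Un)
qed

lemma card_symd:
  assumes "finite U" "finite V"
  shows "card (symd U V) + 2 * card (U \<inter> V) = card U + card V"
proof -
  have a: "card U = card (U - V) + card (U \<inter> V)"
    using assms by (subst card_Un_disjoint[symmetric]) (auto intro!: arg_cong[where f = card])
  have b: "card V = card (V - U) + card (U \<inter> V)"
    using assms by (subst card_Un_disjoint[symmetric]) (auto intro!: arg_cong[where f = card])
  have c: "card (symd U V) = card (U - V) + card (V - U)"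
    unfolding symd_def using assms by (subst card_Un_disjoint) auto
  show ?thesis using a b c by simp
qed

lemma symd_symd: "symd A (symd A X) = X"
  by (auto simp: symd_def)

theorem lemma4:
  fixes E :: "'a set" and F :: "'a set set"
  assumes "delta_matroid E F"
    and "binary_dm E F"
    and "\<forall>e\<in>E. primal_type_u E F e"
  shows "even_dm F"
proof -
  have dm: "finite E \<and> F \<noteq> {} \<and> (\<forall>X\<in>F. X \<subseteq> E)"
    using assms(1) unfolding delta_matroid_def by (elim conjE) (intro conjI)
  have finE: "finite E" and Fne: "F \<noteq> {}" using dm by simp_all
  have FE: "\<And>X. X \<in> F \<Longrightarrow> X \<subseteq> E" using dm by blast
  have finF: "finite F" by (rule finite_subset[of F "Pow E"]) (use FE finE in auto)
  have rl: "\<And>e. e \<in> E \<Longrightarrow> ribbon_loop E F e" and orl: "\<And>e. e \<in> E \<Longrightarrow> \<not> ribbon_loop E (twist F {e}) e"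
    using assms(3) unfolding primal_type_u_def orientable_ribbon_loop_def by blast+
  have emptyF: "{} \<in> F"
  proof -
    have "Min (card ` F) \<in> card ` F" using finF Fne by (intro Min_in) auto
    then obtain X where X: "X \<in> F" "card X = Min (card ` F)" by auto
    have "X \<in> F_min F" unfolding F_min_def using X finF by auto
    then have "X = {}" using rl FE[OF X(1)] unfolding ribbon_loop_def by blast
    then show ?thesis using X by simp
  qed
  have nosing: "{e} \<notin> F" if e: "e \<in> E" for e
  proof
    assume eF: "{e} \<in> F"
    obtain X where X: "X \<in> F_min (twist F {e})" "e \<in> X"
      using orl[OF e] e unfolding ribbon_loop_def by blast
    have "{} \<in> twist F {e}" unfolding twist_def using eF by (force simp: symd_def)
    then have "card X \<le> card ({}::'a set)" using X(1) unfolding F_min_def by blast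
    then have "card X = 0" by simp
    moreover have "finite X"
    proof -
      obtain Y where "Y \<in> F" "X = symd {e} Y" using X(1) unfolding F_min_def twist_def by auto
      then show ?thesis using FE finE finite_subset unfolding symd_def by blast
    qed
    ultimately show False using X(2) by simp
  qed
  obtain A C f where AE: "A \<subseteq> E" and sym: "\<forall>i\<in>E. \<forall>j\<in>E. C i j = C j i"
    and bij: "bij_betw f E E" and img: "(\<lambda>X. f ` X) ` twist F A = DC E C"
    using assms(2) unfolding binary_dm_def by (elim exE conjE) (rule that; assumption)
  have inj: "inj_on f E" and fE: "f ` E = E" using bij unfolding bij_betw_def by simp_all
  have pdet_rec: "pdet C Z = (\<Sum>y\<in>Z. C x y * pdet C (Z - {x, y}))" if "Z \<subseteq> E" "x \<in> Z" for Z x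
  proof -
    have finZ: "finite Z" using that finE finite_subset by blast
    have symZ: "\<forall>i\<in>Z. \<forall>j\<in>Z. C i j = C j i" using sym that by blast
    have "pdet C Z = hh C Z" by (rule pdet_hh[OF finZ symZ])
    also have "\<dots> = (\<Sum>y\<in>Z. C x y * hh C (Z - {x, y}))" by (rule hh_rec[OF finZ that(2) symZ])
    also have "\<dots> = (\<Sum>y\<in>Z. C x y * pdet C (Z - {x, y}))"
    proof (rule sum.cong[OF refl])
      fix y assume "y \<in> Z"
      have "finite (Z - {x, y})" using finZ by simp
      moreover have "\<forall>i\<in>Z - {x, y}. \<forall>j\<in>Z - {x, y}. C i j = C j i" using symZ by blast
      ultimately have "pdet C (Z - {x, y}) = hh C (Z - {x, y})" by (rule pdet_hh)
      then show "C x y * hh C (Z - {x, y}) = C x y * pdet C (Z - {x, y})" by simp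
    qed
    finally show ?thesis .
  qed
  define B where "B = f ` A"
  have BE: "B \<subseteq> E" unfolding B_def using AE fE by auto
  have twistE: "Z \<subseteq> E" if "Z \<in> twist F A" for Z
    using that AE FE unfolding twist_def symd_def by auto
  have imgin: "f ` Z \<in> DC E C" if "Z \<in> twist F A" for Z using img that by blast
  have B1: "pdet C B = 1"
  proof -
    have "A \<in> twist F A" unfolding twist_def using emptyF by (force simp: symd_def)
    then show ?thesis using imgin unfolding B_def DC_def by auto
  qed
  have B0: "pdet C (symd B {s}) = 0" if s: "s \<in> E" for s
  proof (rule ccontr)
    assume "pdet C (symd B {s}) \<noteq> 0"
    moreover have "symd B {s} \<subseteq> E" using BE s unfolding symd_def by auto
    ultimately have "symd B {s} \<in> DC E C" unfolding DC_def by auto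
    then have "symd B {s} \<in> (\<lambda>X. f ` X) ` twist F A" using img by simp
    then obtain Z where Z: "Z \<in> twist F A" "f ` Z = symd B {s}" by blast
    obtain X where X: "X \<in> F" "Z = symd A X" using Z(1) unfolding twist_def by auto
    have "s \<in> f ` E" using s fE by simp
    then obtain e where e: "e \<in> E" "f e = s" by blast
    have "f ` (symd A {e}) = symd B {s}" unfolding B_def using symd_image[OF inj AE, of "{e}"] e by simp
    moreover have "symd A {e} \<subseteq> E" using AE e unfolding symd_def by auto
    ultimately have "Z = symd A {e}" using Z(2) inj_on_image_eq_iff[OF inj twistE[OF Z(1)]] by metis
    then have "symd A (symd A X) = symd A (symd A {e})" using X(2) by simp
    then have "X = {e}" by (simp add: symd_symd)
    then show False using X(1) nosing e by simp
  qed
  have evenG: "even (card (symd B Z))" if Z: "Z \<in> DC E C" for Z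
  proof (rule ccontr)
    assume odd: "odd (card (symd B Z))"
    have ZE: "Z \<subseteq> E" and Z1: "pdet C Z = 1" using Z unfolding DC_def by auto
    have "TT (pdet C) B Z = of_nat (card (symd B Z)) * pdet C B * pdet C Z"
      by (rule ident[OF finE pdet_rec BE ZE]) auto
    also have "\<dots> = 1" using odd B1 Z1 by (simp add: of_nat_bit)
    finally have "TT (pdet C) B Z = 1" .
    moreover have "TT (pdet C) B Z = 0"
      unfolding TT_def
    proof (rule sum.neutral, rule ballI)
      fix s assume "s \<in> symd B Z"
      then have "s \<in> E" using BE ZE unfolding symd_def by auto
      then show "pdet C (symd B {s}) * pdet C (symd Z {s}) = 0" using B0 by simp
    qed
    ultimately show False by simp
  qed
  have finEsub: "finite U" if "U \<subseteq> E" for U using finE that finite_subset by blast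
  show ?thesis unfolding even_dm_def
  proof (intro ballI)
    fix X Y assume X: "X \<in> F" and Y: "Y \<in> F"
    define P where "P = f ` (symd A X)"
    define Q where "Q = f ` (symd A Y)"
    have AXE: "symd A X \<subseteq> E" "symd A Y \<subseteq> E" using AE FE X Y unfolding symd_def by auto
    have PG: "P \<in> DC E C" "Q \<in> DC E C" unfolding P_def Q_def using imgin X Y unfolding twist_def by auto
    have PE: "P \<subseteq> E" "Q \<subseteq> E" using PG unfolding DC_def by auto
    have "symd X Y = symd (symd A X) (symd A Y)" by (auto simp: symd_def)
    then have "card (symd X Y) = card (f ` symd (symd A X) (symd A Y))"
    proof -
      have "symd (symd A X) (symd A Y) \<subseteq> E" using AXE unfolding symd_def by auto
      then have "inj_on f (symd (symd A X) (symd A Y))" using inj inj_on_subset by blast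
      then show ?thesis using \<open>symd X Y = symd (symd A X) (symd A Y)\<close> by (simp add: card_image)
    qed
    also have "f ` symd (symd A X) (symd A Y) = symd P Q"
      unfolding P_def Q_def by (rule symd_image[OF inj AXE])
    finally have cXY: "card (symd X Y) = card (symd P Q)" .
    have e1: "even (card (symd B P))" "even (card (symd B Q))" using evenG PG by auto
    have fin: "finite B" "finite P" "finite Q" using finEsub BE PE by auto
    have "even (card B + card P)" "even (card B + card Q)"
      using card_symd[OF fin(1,2)] card_symd[OF fin(1,3)] e1 by presburger+
    then have "even (card P + card Q)" by presburger
    then have "even (card (symd P Q))" using card_symd[OF fin(2,3)] by presburger
    then show "even (card (symd X Y))" using cXY by simp
  qed
qed

end
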